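(* Suppose $\psi_L:(0,1]\to\mathbb R$ and $\psi_R:[-1,0)\to\mathbb R$ are bounded and Lipschitz, and the rescaled weights satisfy $\alpha_\ell\le\bar\alpha$ with $\bar\alpha$ independent of $n$. Then there is a constant $C$ independent of $n$ such that $$\mathbb E\,\|\delta b\|\le C\sqrt{n^{-3}(1+\log n)},$$ where $\|\cdot\|$ is the norm of $L^2(\sigma_T)$. (The same bound holds for the truncated velocity set $S=[-1,-\delta)\cup(\delta,1]$ with the analogous partition and ordinates.)
   Context: Let $\Omega=[x_L,x_R]$ be a bounded interval and $\sigma_T$ a continuous positive function on $\Omega$. $L^2(\sigma_T)$ is $L^2(\Omega)$ with inner product $\langle f,g\rangle=\int_{x_L}^{x_R}fg\,\sigma_T\,dx$. For $\mu\in[-1,1]\setminus\{0\}$ define $b_\mu(x)=\exp\big(-\frac1\mu\int_{x_L}^x\sigma_T(y)dy\big)\psi_L(\mu)$ if $\mu>0$ and $b_\mu(x)=\exp\big(\frac1\mu\int_x^{x_R}\sigma_T(y)dy\big)\psi_R(\mu)$ if $\mu<0$. Velocity set $S=[-1,1]$, $\fint_S=\frac12\int_{-1}^1$. Let $n=2m$; partition $[-1,0)$ into intervals $S_1,\dots,S_m$ and set $S_{n+1-\ell}=-S_\ell$. For $\ell\le m$ the $\mu_\ell$ are independent, $\mu_\ell$ uniform on $S_\ell$, and $\mu_{n+1-\ell}=-\mu_\ell$. Weights $\omega_\ell=|S_\ell|/|S|$, rescaled weights $\alpha_\ell=n\omega_\ell$. Define $\delta b(x)=\sum_{\ell=1}^n\omega_\ell\,b_{\mu_\ell}(x)-\fint_S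 b_\mu(x)\,d\mu$. $\mathbb E$ denotes expectation over the random ordinates. *)

theory Defs
  imports "HOL-Probability.Probability"
begin

text \<open>Velocity set S = [-1,-d) \<union> (d,1]; d = 0 is the untruncated set [-1,1] minus {0}
  (the point 0 is a null set and b is undefined there).\<close>
definition vel_set :: "real \<Rightarrow> real set" where
  "vel_set d = {-1..<-d} \<union> {d<..1}"

definition bfun :: "(real \<Rightarrow> real) \<Rightarrow> real \<Rightarrow> real \<Rightarrow> (real \<Rightarrow> real) \<Rightarrow> (real \<Rightarrow> real)
    \<Rightarrow> real \<Rightarrow> real \<Rightarrow> real" where
  "bfun \<sigma> xL xR \<psi>L \<psi>R \<mu> x =
     (if \<mu> > 0 then exp (- (1/\<mu>) * integral {xL..x} \<sigma>) * \<psi>L \<mu>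
      else if \<mu> < 0 then exp ((1/\<mu>) * integral {x..xR} \<sigma>) * \<psi>R \<mu>
      else 0)"

definition ordinate :: "nat \<Rightarrow> (nat \<Rightarrow> real) \<Rightarrow> nat \<Rightarrow> real" where
  "ordinate m \<mu> j = (if j \<le> m then \<mu> j else - \<mu> (2*m + 1 - j))"

text \<open>Weights omega_l = |S_l|/|S|, where S_l = [t_{l-1}, t_l) for l \<le> m,
  S_{n+1-l} = - S_l, and |S| = 2(1-d).\<close>
definition weight :: "real \<Rightarrow> nat \<Rightarrow> (nat \<Rightarrow> real) \<Rightarrow> nat \<Rightarrow> real" where
  "weight d m t j =
     (if j \<le> m then t j - t (j - 1) else t (2*m + 1 - j) - t (2*m - j)) / (2 * (1 - d))"

definition delta_b :: "real \<Rightarrow> (real \<Rightarrow> real) \<Rightarrow> real \<Rightarrow> real \<Rightarrow> (real \<Rightarrow> real) \<Rightarrow> (real \<Rightarrow> real)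
    \<Rightarrow> nat \<Rightarrow> (nat \<Rightarrow> real) \<Rightarrow> (nat \<Rightarrow> real) \<Rightarrow> real \<Rightarrow> real" where
  "delta_b d \<sigma> xL xR \<psi>L \<psi>R m t \<mu> x =
     (\<Sum>j=1..2*m. weight d m t j * bfun \<sigma> xL xR \<psi>L \<psi>R (ordinate m \<mu> j) x)
     - (1 / (2 * (1 - d))) * (LINT v : vel_set d | lborel. bfun \<sigma> xL xR \<psi>L \<psi>R v x)"

definition L2_sigma_norm :: "(real \<Rightarrow> real) \<Rightarrow> real \<Rightarrow> real \<Rightarrow> (real \<Rightarrow> real) \<Rightarrow> real" where
  "L2_sigma_norm \<sigma> xL xR f = sqrt (integral {xL..xR} (\<lambda>x. (f x)^2 * \<sigma> x))"

definition ordinate_law :: "nat \<Rightarrow> (nat \<Rightarrow> real) \<Rightarrow> (nat \<Rightarrow> real) measure" where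
  "ordinate_law m t = PiM {1..m} (\<lambda>l. uniform_measure lborel {t (l - 1)..<t l})"

end

theory Submission
  imports Defs
begin

definition Ef :: "real \<Rightarrow> real \<Rightarrow> real" where
  "Ef g w = (if w \<le> 0 then 0 else exp (- g / w))"

lemma Ef_nonneg: "0 \<le> Ef g w" by (simp add: Ef_def)

lemma Ef_le1: "0 \<le> g \<Longrightarrow> Ef g w \<le> 1"
  by (auto simp: Ef_def)

lemma Ef_mono: assumes "0 \<le> g" "p \<le> q" shows "Ef g p \<le> Ef g q"
proof (cases "p \<le> 0")
  case True then show ?thesis by (simp add: Ef_def)
next
  case False
  then have "g / q \<le> g / p" using assms by (intro divide_left_mono) auto
  then show ?thesis using False assms by (auto simp: Ef_def)
qed

lemma exp_neg_le_inv: assumes "(s::real) > 0" shows "exp (- s) \<le> 1 / s"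
proof -
  have "s \<le> exp s" using exp_ge_add_one_self[of s] by linarith
  then show ?thesis using assms by (simp add: exp_minus field_simps)
qed

lemma sq_exp_neg_le: assumes "(s::real) \<ge> 0" shows "s^2 * exp (- s) \<le> 4"
proof -
  have "1 + s/2 \<le> exp (s/2)" using exp_ge_add_one_self by blast
  then have "(1 + s/2)^2 \<le> (exp (s/2))^2" using assms by (intro power_mono) auto
  also have "(exp (s/2))^2 = exp s" by (simp add: power2_eq_square exp_add[symmetric])
  finally have "s^2 \<le> 4 * exp s" using assms by (simp add: power2_eq_square field_simps)
  then show ?thesis by (simp add: exp_minus field_simps)
qed

lemma Ef_lip: assumes g: "g > 0" and pq: "0 \<le> p" "p \<le> q"
  shows "Ef g q - Ef g p \<le> 8 * (q - p) / g"
proof (cases "p = 0")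
  case True
  show ?thesis
  proof (cases "q = 0")
    case True then show ?thesis using \<open>p = 0\<close> by (simp add: Ef_def)
  next
    case False
    then have q: "q > 0" using pq by auto
    have "exp (- (g/q)) \<le> 1 / (g/q)" using exp_neg_le_inv[of "g/q"] q g by simp
    then have "Ef g q \<le> q / g" using q by (simp add: Ef_def)
    also have "\<dots> \<le> 8 * (q - p) / g" using True q g by (simp add: divide_right_mono)
    finally show ?thesis using True by (simp add: Ef_def)
  qed
next
  case False
  then have p: "p > 0" using pq by auto
  then have q: "q > 0" using pq by auto
  show ?thesis
  proof (cases "2 * p < q")
    case True
    have "exp (- (g/q)) \<le> 1 / (g/q)" using exp_neg_le_inv[of "g/q"] q g by simp
    then have "Ef g q \<le> q / g" using q by (simp add: Ef_def)
    also have "\<dots> \<le> 8 * (q - p) / g" using True q g by (simp add: divide_right_mono)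
    finally show ?thesis using Ef_nonneg[of g p] by linarith
  next
    case False
    define y where "y = g / p - g / q"
    have y0: "0 \<le> y" unfolding y_def using p q pq g by (simp add: divide_left_mono)
    have yeq: "y = g * (q - p) / (p * q)" unfolding y_def using p q by (simp add: field_simps)
    have "exp (- g / p) = exp (- g / q) * exp (- y)" unfolding y_def
      by (simp add: exp_add[symmetric])
    then have "Ef g q - Ef g p = exp (- g / q) * (1 - exp (- y))"
      using p q by (simp add: Ef_def algebra_simps)
    also have "\<dots> \<le> exp (- g / q) * y"
    proof -
      have "1 - y \<le> exp (- y)" using exp_ge_add_one_self[of "-y"] by simp
      then show ?thesis by (intro mult_left_mono) auto
    qed
    also have "\<dots> \<le> exp (- g / q) * (2 * g * (q - p) / q^2)"
    proof -
      have "1 / p \<le> 2 / q" using False p q by (simp add: field_simps)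
      then have "(g * (q - p) / q) * (1 / p) \<le> (g * (q - p) / q) * (2 / q)"
        using g q pq by (intro mult_left_mono) auto
      then have "y \<le> 2 * g * (q - p) / q^2" unfolding yeq
        by (simp add: power2_eq_square mult.commute mult.left_commute)
      then show ?thesis by (intro mult_left_mono) auto
    qed
    also have "\<dots> = 2 * ((g/q)^2 * exp (- (g/q))) * (q - p) / g"
      using g q by (simp add: field_simps power2_eq_square)
    also have "\<dots> \<le> 2 * 4 * (q - p) / g"
      using sq_exp_neg_le[of "g/q"] g q pq
      by (intro divide_right_mono mult_right_mono mult_left_mono) auto
    finally show ?thesis by simp
  qed
qed


locale ctx =
  fixes xL xR d LL LR :: real and \<sigma> \<psi>L \<psi>R :: "real \<Rightarrow> real"
  assumes xLR: "xL < xR" and scont: "continuous_on {xL..xR} \<sigma>"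
    and spos: "\<And>x. x \<in> {xL..xR} \<Longrightarrow> \<sigma> x > 0"
    and lipL: "LL-lipschitz_on {0<..1} \<psi>L" and lipR: "LR-lipschitz_on {-1..<0} \<psi>R"
    and d0: "0 \<le> d" and d1: "d < 1"
begin

definition "gL x = integral {xL..x} \<sigma>"
definition "gR x = integral {x..xR} \<sigma>"
definition "cl x = max xL (min x xR)"
definition "bb v x = (if v > 0 then Ef (gL (cl x)) v * (indicator {0<..1} v * \<psi>L v)
   else if v < 0 then Ef (gR (cl x)) (- v) * (indicator {-1..<0} v * \<psi>R v) else 0)"

lemma sint: "\<sigma> integrable_on {xL..xR}" by (rule integrable_continuous_interval[OF scont])

lemma sint_sub: "a \<in> {xL..xR} \<Longrightarrow> b \<in> {xL..xR} \<Longrightarrow> \<sigma> integrable_on {a..b}"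
  by (rule integrable_continuous_interval, rule continuous_on_subset[OF scont]) auto

lemma gL_cont: "continuous_on {xL..xR} gL"
  unfolding gL_def[abs_def] by (rule indefinite_integral_continuous_1[OF sint])

lemma gR_cont: "continuous_on {xL..xR} gR"
  unfolding gR_def[abs_def] by (rule indefinite_integral_continuous_1'[OF sint])

lemma cl_in: "cl x \<in> {xL..xR}" using xLR by (auto simp: cl_def)
lemma cl_id: "x \<in> {xL..xR} \<Longrightarrow> cl x = x" by (auto simp: cl_def)
lemma cl_cont: "continuous_on UNIV cl" unfolding cl_def[abs_def] by (intro continuous_intros)

lemma gLcl_cont: "continuous_on UNIV (\<lambda>x. gL (cl x))"
  by (rule continuous_on_compose2[OF gL_cont cl_cont]) (use cl_in in auto)
lemma gRcl_cont: "continuous_on UNIV (\<lambda>x. gR (cl x))"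
  by (rule continuous_on_compose2[OF gR_cont cl_cont]) (use cl_in in auto)

lemma gLcl_meas[measurable]: "(\<lambda>x. gL (cl x)) \<in> borel_measurable borel"
  by (rule borel_measurable_continuous_onI[OF gLcl_cont])
lemma gRcl_meas[measurable]: "(\<lambda>x. gR (cl x)) \<in> borel_measurable borel"
  by (rule borel_measurable_continuous_onI[OF gRcl_cont])

lemma psiL_meas[measurable]: "(\<lambda>v. indicator {0<..1} v * \<psi>L v) \<in> borel_measurable borel"
  using borel_measurable_continuous_on_indicator[of "{0<..1}" \<psi>L] lipschitz_on_continuous_on[OF lipL]
  by simp
lemma psiR_meas[measurable]: "(\<lambda>v. indicator {-1..<0} v * \<psi>R v) \<in> borel_measurable borel"
  using borel_measurable_continuous_on_indicator[of "{-1..<0}" \<psi>R] lipschitz_on_continuous_on[OF lipR]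
  by simp

lemma Ef_meas[measurable]:
  assumes [measurable]: "f \<in> borel_measurable N" "g \<in> borel_measurable N"
  shows "(\<lambda>z. Ef (f z) (g z)) \<in> borel_measurable N"
  unfolding Ef_def by measurable

lemma bb_meas[measurable]:
  assumes [measurable]: "f \<in> borel_measurable N" "g \<in> borel_measurable N"
  shows "(\<lambda>z. bb (f z) (g z)) \<in> borel_measurable N"
  unfolding bb_def by measurable

lemma gL_ge: assumes "x \<in> {xL..xR}" "\<And>y. y \<in> {xL..xR} \<Longrightarrow> s0 \<le> \<sigma> y"
  shows "s0 * (x - xL) \<le> gL x"
proof -
  have "integral {xL..x} (\<lambda>y. s0) \<le> integral {xL..x} \<sigma>"
    using assms by (intro integral_le sint_sub) auto
  then show ?thesis using assms(1) by (simp add: gL_def mult.commute)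
qed

lemma gR_ge: assumes "x \<in> {xL..xR}" "\<And>y. y \<in> {xL..xR} \<Longrightarrow> s0 \<le> \<sigma> y"
  shows "s0 * (xR - x) \<le> gR x"
proof -
  have "integral {x..xR} (\<lambda>y. s0) \<le> integral {x..xR} \<sigma>"
    using assms by (intro integral_le sint_sub) auto
  then show ?thesis using assms(1) by (simp add: gR_def mult.commute)
qed

lemma gL_nonneg: "x \<in> {xL..xR} \<Longrightarrow> 0 \<le> gL x"
  using gL_ge[of x 0] spos by force
lemma gR_nonneg: "x \<in> {xL..xR} \<Longrightarrow> 0 \<le> gR x"
  using gR_ge[of x 0] spos by force

lemma bfun_pos: assumes "v \<in> {0<..1}" "x \<in> {xL..xR}"
  shows "bfun \<sigma> xL xR \<psi>L \<psi>R v x = bb v x" "bb v x = Ef (gL x) v * \<psi>L v"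
  using assms by (auto simp: bfun_def bb_def Ef_def cl_id gL_def)

lemma bfun_neg: assumes "v \<in> {-1..<0}" "x \<in> {xL..xR}"
  shows "bfun \<sigma> xL xR \<psi>L \<psi>R v x = bb v x" "bb v x = Ef (gR x) (- v) * \<psi>R v"
  using assms by (auto simp: bfun_def bb_def Ef_def cl_id gR_def)

end


lemma uniform_lborel_density:
  assumes A: "A \<in> sets borel" "0 < measure lborel A" "emeasure lborel A < \<infinity>"
  shows "uniform_measure lborel A = density lborel (\<lambda>x. ennreal (indicator A x / measure lborel A))"
proof -
  have e: "emeasure lborel A = ennreal (measure lborel A)"
    using A by (simp add: emeasure_eq_ennreal_measure less_top)
  show ?thesis unfolding uniform_measure_def e
    by (intro density_cong) (use A in \<open>auto simp: divide_ennreal divide_ennreal[of 1, simplified] split: split_indicator\<close>)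
qed

lemma uniform_lborel_integral:
  fixes f :: "real \<Rightarrow> real"
  assumes A: "A \<in> sets borel" "0 < measure lborel A" "emeasure lborel A < \<infinity>"
    and f[measurable]: "f \<in> borel_measurable borel"
  shows "integral\<^sup>L (uniform_measure lborel A) f = (LINT x:A|lborel. f x) / measure lborel A"
proof -
  have [measurable]: "A \<in> sets borel" using A by simp
  have "integral\<^sup>L (uniform_measure lborel A) f
      = integral\<^sup>L lborel (\<lambda>x. (indicator A x / measure lborel A) *\<^sub>R f x)"
    unfolding uniform_lborel_density[OF A]
    by (rule integral_density) (use A in \<open>auto simp: split: split_indicator\<close>)
  also have "\<dots> = integral\<^sup>L lborel (\<lambda>x. (indicator A x *\<^sub>R f x) / measure lborel A)"
    by (simp add: field_simps)
  also have "\<dots> = (LINT x:A|lborel. f x) / measure lborel A"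
    unfolding set_lebesgue_integral_def by (rule integral_divide_zero)
  finally show ?thesis .
qed

lemma uniform_lborel_prob:
  assumes A: "A \<in> sets borel" "0 < measure lborel A" "emeasure lborel A < \<infinity>"
  shows "prob_space (uniform_measure lborel A)"
proof (rule prob_space_uniform_measure)
  show "emeasure lborel A \<noteq> 0" using A by (auto simp: measure_def)
qed (use A in auto)

lemma uniform_Ico:
  fixes a b :: real assumes "a < b"
  shows "{a..<b} \<in> sets borel" "0 < measure lborel {a..<b}" "emeasure lborel {a..<b} < \<infinity>"
    "measure lborel {a..<b} = b - a"
  using assms by auto

lemma uniform_Icc:
  fixes a b :: real assumes "a < b"
  shows "{a..b} \<in> sets borel" "0 < measure lborel {a..b}" "emeasure lborel {a..b} < \<infinity>"
    "measure lborel {a..b} = b - a"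
  using assms by auto

lemma set_integrable_bounded:
  fixes f :: "real \<Rightarrow> real"
  assumes "A \<in> sets borel" "emeasure lborel A < \<infinity>" "f \<in> borel_measurable borel"
    "\<And>x. x \<in> A \<Longrightarrow> \<bar>f x\<bar> \<le> B"
  shows "set_integrable lborel A f"
  unfolding set_integrable_def
  by (rule integrableI_bounded_set_indicator[where B=B]) (use assms in auto)

lemma sum_telescope_1:
  fixes f :: "nat \<Rightarrow> real"
  shows "(\<Sum>l\<in>{1..k}. f (l - 1) - f l) = f 0 - f k"
  by (induction k) (auto simp: atLeastAtMostSuc_conv)


locale ctx2 = ctx +
  fixes M0 s0 s1 :: real
  assumes M0L: "\<And>v. v \<in> {0<..1} \<Longrightarrow> \<bar>\<psi>L v\<bar> \<le> M0"
    and M0R: "\<And>v. v \<in> {-1..<0} \<Longrightarrow> \<bar>\<psi>R v\<bar> \<le> M0"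
    and s0pos: "0 < s0" and sbnd: "\<And>x. x \<in> {xL..xR} \<Longrightarrow> s0 \<le> \<sigma> x \<and> \<sigma> x \<le> s1"
begin

lemma M0_nonneg: "0 \<le> M0" using M0L[of 1] by auto
lemma LL_nonneg: "0 \<le> LL" using lipL by (auto simp: lipschitz_on_def)
lemma LR_nonneg: "0 \<le> LR" using lipR by (auto simp: lipschitz_on_def)
lemma s1_pos: "0 < s1" using sbnd[of xL] xLR s0pos by auto

lemma bb_bound: "\<bar>bb v x\<bar> \<le> M0"
proof -
  have gl: "0 \<le> gL (cl x)" "0 \<le> gR (cl x)" using gL_nonneg gR_nonneg cl_in by auto
  have e1: "\<bar>Ef (gL (cl x)) v\<bar> \<le> 1" "\<bar>Ef (gR (cl x)) (-v)\<bar> \<le> 1"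
    using Ef_le1[OF gl(1)] Ef_le1[OF gl(2)] Ef_nonneg by (auto simp del: Ef_def)
  have p1: "\<bar>indicator {0<..1} v * \<psi>L v\<bar> \<le> M0" using M0L[of v] M0_nonneg
    by (cases "v \<in> {0<..1}") (auto simp: indicator_def)
  have p2: "\<bar>indicator {-1..<0} v * \<psi>R v\<bar> \<le> M0" using M0R[of v] M0_nonneg
    by (cases "v \<in> {-1..<0}") (auto simp: indicator_def)
  have "\<bar>Ef (gL (cl x)) v * (indicator {0<..1} v * \<psi>L v)\<bar> \<le> 1 * M0"
    by (subst abs_mult) (intro mult_mono e1 p1, auto)
  moreover have "\<bar>Ef (gR (cl x)) (-v) * (indicator {-1..<0} v * \<psi>R v)\<bar> \<le> 1 * M0"
    by (subst abs_mult) (intro mult_mono e1 p2, auto)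
  ultimately show ?thesis unfolding bb_def using M0_nonneg by auto
qed

end

locale ctx3 = ctx2 +
  fixes m :: nat and t :: "nat \<Rightarrow> real" and ab :: real
  assumes m1: "1 \<le> m" and t0: "t 0 = -1" and tm: "t m = -d"
    and tmono: "\<And>l. l \<in> {1..m} \<Longrightarrow> t (l - 1) < t l"
    and wb: "\<And>j. j \<in> {1..2*m} \<Longrightarrow> real (2*m) * weight d m t j \<le> ab"
begin

definition "S l = {t (l - 1)..<t l}"
definition "hh l = t l - t (l - 1)"
definition "om l = hh l / (2 * (1 - d))"
definition "U l = (if l \<in> {1..m} then uniform_measure lborel (S l) else uniform_measure lborel {0..<1::real})"
definition "P = PiM {1..m} U"

lemma t_mono: "a \<le> b \<Longrightarrow> b \<le> m \<Longrightarrow> t a \<le> t b"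
proof (induction b)
  case 0 then show ?case by simp
next
  case (Suc b)
  show ?case
  proof (cases "a = Suc b")
    case False
    then have "t a \<le> t b" using Suc by auto
    also have "t b < t (Suc b)" using tmono[of "Suc b"] Suc by auto
    finally show ?thesis by simp
  qed simp
qed

lemma t_range: "l \<le> m \<Longrightarrow> -1 \<le> t l \<and> t l \<le> -d"
  using t_mono[of 0 l] t_mono[of l m] t0 tm by auto

lemma hh_pos: "l \<in> {1..m} \<Longrightarrow> 0 < hh l" using tmono by (auto simp: hh_def)

lemma S_sub: "l \<in> {1..m} \<Longrightarrow> S l \<subseteq> {-1..<-d}"
  using t_range[of l] t_range[of "l-1"] by (auto simp: S_def) (use t_range[of "l-1"] in linarith)

lemma d1': "0 < 1 - d" using d1 by simp

lemma om_pos: "l \<in> {1..m} \<Longrightarrow> 0 < om l" using hh_pos d1' by (simp add: om_def)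

lemma om_le: assumes "l \<in> {1..m}" shows "om l \<le> ab / (2 * m)"
proof -
  have "real (2*m) * weight d m t l \<le> ab" using wb[of l] assms by auto
  moreover have "weight d m t l = om l" using assms by (simp add: weight_def om_def hh_def)
  ultimately show ?thesis using m1 by (simp add: field_simps)
qed

lemma ab_pos: "0 < ab"
proof -
  have "0 < om 1" using om_pos m1 by auto
  also have "\<dots> \<le> ab / (2*m)" using om_le[of 1] m1 by auto
  finally show ?thesis using m1 by (simp add: zero_less_divide_iff)
qed

lemma hh_le: "l \<in> {1..m} \<Longrightarrow> hh l \<le> 2 * om l"
  using hh_pos[of l] d0 d1 by (simp add: om_def field_simps)

lemma sum_hh: "(\<Sum>l\<in>{1..m}. hh l) = 1 - d"
proof -
  have "(\<Sum>l\<in>{1..m}. hh l) = - (\<Sum>l\<in>{1..m}. t (l - 1) - t l)"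
    by (simp add: hh_def sum_negf[symmetric])
  also have "\<dots> = 1 - d" using sum_telescope_1[of t m] by (simp add: t0 tm)
  finally show ?thesis .
qed

lemma sum_om: "(\<Sum>l\<in>{1..m}. om l) = 1/2"
  using sum_hh d1' by (simp add: om_def sum_divide_distrib[symmetric])

lemma S_props: "l \<in> {1..m} \<Longrightarrow> S l \<in> sets borel \<and> 0 < measure lborel (S l) \<and>
   emeasure lborel (S l) < \<infinity> \<and> measure lborel (S l) = hh l"
  using uniform_Ico[of "t (l-1)" "t l"] tmono[of l] by (auto simp: S_def hh_def)

lemma U_prob: "prob_space (U l)"
  unfolding U_def using S_props[of l] uniform_lborel_prob uniform_Ico[of 0 "1::real"]
  by auto

lemma U_integral: assumes "l \<in> {1..m}" "f \<in> borel_measurable borel"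
  shows "integral\<^sup>L (U l) f = (LINT v:S l|lborel. f v) / hh l"
  using uniform_lborel_integral[of "S l" f] S_props[OF assms(1)] assms by (simp add: U_def)

lemma sets_U[measurable_cong]: "sets (U l) = sets borel" by (simp add: U_def)

lemma P_eq: "ordinate_law m t = P"
  unfolding ordinate_law_def P_def by (rule PiM_cong) (auto simp: U_def S_def)

sublocale U: product_prob_space U
  by (simp add: product_prob_space_def product_prob_space_axioms_def product_sigma_finite_def
     U_prob prob_space_imp_sigma_finite)

lemma P_prob: "prob_space P" unfolding P_def by (rule prob_space_PiM[OF U_prob])

lemma AE_good: "AE \<mu> in P. \<forall>l\<in>{1..m}. \<mu> l \<in> S l"
  unfolding P_def
proof (rule eventually_ball_finite, simp, intro ballI)
  fix l assume l: "l \<in> {1..m}"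
  have "AE v in U l. v \<in> S l"
    unfolding U_def using l S_props[OF l] by (auto intro!: AE_uniform_measureI)
  then show "AE \<mu> in Pi\<^sub>M {1..m} U. \<mu> l \<in> S l"
    by (rule AE_PiM_component[OF U_prob l])
qed

lemma partition_k: "k \<le> m \<Longrightarrow> (\<Sum>l\<in>{1..k}. indicator (S l) v) = (indicator {t 0..<t k} v :: real)"
proof (induction k)
  case 0 then show ?case by simp
next
  case (Suc k)
  have "t 0 \<le> t k" "t k \<le> t (Suc k)" using t_mono Suc by auto
  then show ?case using Suc by (auto simp: atLeastAtMostSuc_conv S_def split: split_indicator)
qed

lemma partition: "(\<Sum>l\<in>{1..m}. indicator (S l) v) = (indicator {-1..<-d} v :: real)"
  using partition_k[of m] t0 tm by simp

end


context ctx2 begin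

lemma int_ind_bb:
  assumes A: "A \<in> sets borel" "emeasure lborel A < \<infinity>" and f: "f \<in> borel_measurable borel"
  shows "integrable lborel (\<lambda>v. indicator A v * bb (f v) x)"
proof -
  have "integrable lborel (\<lambda>v. indicator A v *\<^sub>R bb (f v) x)"
    by (rule integrableI_bounded_set_indicator[where B=M0]) (use A f bb_bound in auto)
  then show ?thesis by simp
qed

lemma reflect: "(LINT v:{-1..<-d}|lborel. bb (- v) x) = (LINT v:{d<..1}|lborel. bb v x)"
proof -
  have "(LINT v:{d<..1}|lborel. bb v x) = integral\<^sup>L lborel (\<lambda>v. indicator {d<..1} v * bb v x)"
    by (simp add: set_lebesgue_integral_def)
  also have "\<dots> = \<bar>-1\<bar> *\<^sub>R integral\<^sup>L lborel (\<lambda>v. indicator {d<..1} (0 + -1 * v) * bb (0 + -1 * v) x)"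
    by (rule lborel_integral_real_affine) simp
  also have "\<dots> = integral\<^sup>L lborel (\<lambda>v. indicator {-1..<-d} v * bb (- v) x)"
  proof -
    have eq: "\<And>v. indicator {d<..1} (0 + -1 * v) = (indicator {-1..<-d} v :: real)"
      by (auto simp: indicator_def)
    show ?thesis by (simp only: eq) simp
  qed
  also have "\<dots> = (LINT v:{-1..<-d}|lborel. bb (- v) x)"
    by (simp add: set_lebesgue_integral_def)
  finally show ?thesis by simp
qed

lemma vel_split: "(LINT v:vel_set d|lborel. bb v x)
   = (LINT v:{-1..<-d}|lborel. bb v x) + (LINT v:{d<..1}|lborel. bb v x)"
proof -
  have ind: "indicator (vel_set d) v = indicator {-1..<-d} v + (indicator {d<..1} v :: real)" for v
    using d0 by (auto simp: vel_set_def indicator_def)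
  have "(LINT v:vel_set d|lborel. bb v x)
     = integral\<^sup>L lborel (\<lambda>v. indicator {-1..<-d} v * bb v x + indicator {d<..1} v * bb v x)"
    by (simp add: set_lebesgue_integral_def ind algebra_simps)
  also have "\<dots> = integral\<^sup>L lborel (\<lambda>v. indicator {-1..<-d} v * bb v x)
      + integral\<^sup>L lborel (\<lambda>v. indicator {d<..1} v * bb v x)"
    by (intro Bochner_Integration.integral_add int_ind_bb) (use d0 d1 in auto)
  finally show ?thesis by (simp add: set_lebesgue_integral_def)
qed

lemma vel_bfun: assumes "x \<in> {xL..xR}"
  shows "(LINT v:vel_set d|lborel. bfun \<sigma> xL xR \<psi>L \<psi>R v x) = (LINT v:vel_set d|lborel. bb v x)"
proof (rule set_lebesgue_integral_cong)
  show "vel_set d \<in> sets lborel" by (simp add: vel_set_def)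
  show "\<forall>v. v \<in> vel_set d \<longrightarrow> bfun \<sigma> xL xR \<psi>L \<psi>R v x = bb v x"
  proof (intro allI impI)
    fix v assume "v \<in> vel_set d"
    then have "v \<in> {-1..<0} \<or> v \<in> {0<..1}" using d0 by (auto simp: vel_set_def)
    then show "bfun \<sigma> xL xR \<psi>L \<psi>R v x = bb v x" using bfun_pos bfun_neg assms by auto
  qed
qed

end

context ctx3 begin

definition "Y l v x = om l * (bb v x + bb (- v) x)"
definition "c l x = integral\<^sup>L (U l) (\<lambda>v. Y l v x)"
definition "Z l v x = Y l v x - c l x"
definition "db \<mu> x = (\<Sum>l\<in>{1..m}. Z l (\<mu> l) x)"

lemma Y_meas[measurable]:
  assumes [measurable]: "f \<in> borel_measurable N" "g \<in> borel_measurable N"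
  shows "(\<lambda>z. Y l (f z) (g z)) \<in> borel_measurable N"
  unfolding Y_def by measurable

lemma c_formula: assumes l: "l \<in> {1..m}"
  shows "c l x = (1 / (2 * (1 - d))) * (LINT v:S l|lborel. bb v x + bb (- v) x)"
proof -
  have "c l x = (LINT v:S l|lborel. Y l v x) / hh l"
    unfolding c_def by (rule U_integral[OF l]) measurable
  also have "\<dots> = (om l / hh l) * (LINT v:S l|lborel. bb v x + bb (- v) x)"
    unfolding Y_def by simp
  also have "om l / hh l = 1 / (2 * (1 - d))" using hh_pos[OF l] d1' by (simp add: om_def)
  finally show ?thesis .
qed

lemma sum_c: "(\<Sum>l\<in>{1..m}. c l x) = (1 / (2 * (1 - d))) * (LINT v:vel_set d|lborel. bb v x)"
proof -
  define G where "G v = bb v x + bb (- v) x" for v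
  have intS: "integrable lborel (\<lambda>v. indicator (S l) v * G v)" if l: "l \<in> {1..m}" for l
    unfolding G_def distrib_left
    by (intro Bochner_Integration.integrable_add int_ind_bb) (use S_props[OF l] in auto)
  have "(\<Sum>l\<in>{1..m}. c l x) = (1 / (2 * (1 - d))) * (\<Sum>l\<in>{1..m}. integral\<^sup>L lborel (\<lambda>v. indicator (S l) v * G v))"
    by (simp add: c_formula sum_distrib_left set_lebesgue_integral_def G_def)
  also have "(\<Sum>l\<in>{1..m}. integral\<^sup>L lborel (\<lambda>v. indicator (S l) v * G v))
      = integral\<^sup>L lborel (\<lambda>v. \<Sum>l\<in>{1..m}. indicator (S l) v * G v)"
    by (rule Bochner_Integration.integral_sum[symmetric]) (use intS in auto)
  also have "\<dots> = integral\<^sup>L lborel (\<lambda>v. indicator {-1..<-d} v * G v)"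
    unfolding sum_distrib_right[symmetric] partition ..
  also have "\<dots> = (LINT v:{-1..<-d}|lborel. bb v x) + (LINT v:{-1..<-d}|lborel. bb (-v) x)"
    unfolding G_def distrib_left set_lebesgue_integral_def
    by (simp, intro Bochner_Integration.integral_add int_ind_bb) (use d0 d1 in auto)
  also have "\<dots> = (LINT v:vel_set d|lborel. bb v x)" by (simp add: reflect vel_split)
  finally show ?thesis .
qed

lemma sum_split: "(\<Sum>j\<in>{1..2*m}. f j) = (\<Sum>l\<in>{1..m}. f l) + (\<Sum>l\<in>{1..m}. f (2*m + 1 - l))"
  for f :: "nat \<Rightarrow> real"
proof -
  have "{1..2*m} = {1..m} \<union> {m+1..2*m}" by auto
  then have "(\<Sum>j\<in>{1..2*m}. f j) = (\<Sum>l\<in>{1..m}. f l) + (\<Sum>j\<in>{m+1..2*m}. f j)"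
    by (simp add: sum.union_disjoint)
  also have "(\<Sum>j\<in>{m+1..2*m}. f j) = (\<Sum>l\<in>{1..m}. f (2*m + 1 - l))"
    by (rule sum.reindex_bij_witness[of _ "\<lambda>j. 2*m+1-j" "\<lambda>j. 2*m+1-j"]) auto
  finally show ?thesis .
qed

lemma delta_b_eq: assumes good: "\<forall>l\<in>{1..m}. \<mu> l \<in> S l" and x: "x \<in> {xL..xR}"
  shows "delta_b d \<sigma> xL xR \<psi>L \<psi>R m t \<mu> x = db \<mu> x"
proof -
  have neg: "\<mu> l \<in> {-1..<0}" if "l \<in> {1..m}" for l
    using good that S_sub[OF that] d0 by force
  have A: "weight d m t l * bfun \<sigma> xL xR \<psi>L \<psi>R (ordinate m \<mu> l) x = om l * bb (\<mu> l) x"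
    if l: "l \<in> {1..m}" for l
    using l bfun_neg(1)[OF neg[OF l] x] by (simp add: weight_def ordinate_def om_def hh_def)
  have B: "weight d m t (2*m+1-l) * bfun \<sigma> xL xR \<psi>L \<psi>R (ordinate m \<mu> (2*m+1-l)) x = om l * bb (- \<mu> l) x"
    if l: "l \<in> {1..m}" for l
  proof -
    have "- \<mu> l \<in> {0<..1}" using neg[OF l] by auto
    moreover have "2*m - (2*m+1-l) = l - 1" "2*m+1-(2*m+1-l) = l" "\<not> 2*m+1-l \<le> m" using l by auto
    ultimately show ?thesis using l bfun_pos(1)[of "- \<mu> l" x] x
      by (simp add: weight_def ordinate_def om_def hh_def)
  qed
  have "(\<Sum>j\<in>{1..2*m}. weight d m t j * bfun \<sigma> xL xR \<psi>L \<psi>R (ordinate m \<mu> j) x)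
     = (\<Sum>l\<in>{1..m}. Y l (\<mu> l) x)"
    unfolding sum_split Y_def distrib_left sum.distrib using A B by simp
  then show ?thesis
    unfolding delta_b_def db_def Z_def sum_subtractf vel_bfun[OF x] sum_c by simp
qed

end


context ctx3 begin

lemma comp_meas[measurable]: "l \<in> {1..m} \<Longrightarrow> (\<lambda>\<mu>. \<mu> l) \<in> borel_measurable P"
  unfolding P_def using measurable_component_singleton[of l "{1..m}" U]
  by (simp add: measurable_cong_sets[OF refl sets_U])

lemma Y_bound: "\<bar>Y l v x\<bar> \<le> 2 * \<bar>om l\<bar> * M0"
proof -
  have "\<bar>bb v x + bb (- v) x\<bar> \<le> 2 * M0" using bb_bound[of v x] bb_bound[of "-v" x] by linarith
  then have "\<bar>om l\<bar> * \<bar>bb v x + bb (- v) x\<bar> \<le> \<bar>om l\<bar> * (2 * M0)"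
    by (intro mult_left_mono) auto
  then show ?thesis unfolding Y_def abs_mult by simp
qed

lemma Y_int: "integrable (U l) (\<lambda>v. Y l v x)"
proof -
  show ?thesis by (rule U.M.integrable_const_bound[where B="2 * \<bar>om l\<bar> * M0"])
    (use Y_bound in \<open>auto simp: measurable_cong_sets[OF sets_U refl]\<close>)
qed

lemma c_bound: "\<bar>c l x\<bar> \<le> 2 * \<bar>om l\<bar> * M0"
proof -
  have "\<bar>c l x\<bar> \<le> integral\<^sup>L (U l) (\<lambda>v. \<bar>Y l v x\<bar>)" unfolding c_def by (rule integral_abs_bound)
  also have "\<dots> \<le> integral\<^sup>L (U l) (\<lambda>v. 2 * \<bar>om l\<bar> * M0)"
    by (intro integral_mono Y_bound) (use Y_int in auto)
  finally show ?thesis by (simp add: U.M.prob_space)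
qed

lemma Z_bound: "\<bar>Z l v x\<bar> \<le> 4 * \<bar>om l\<bar> * M0"
  using Y_bound[of l v x] c_bound[of l x] unfolding Z_def by linarith

lemma Z_meas[measurable]:
  assumes [measurable]: "f \<in> borel_measurable N"
  shows "(\<lambda>z. Z l (f z) x) \<in> borel_measurable N"
  unfolding Z_def by measurable

lemma Z_int: "integrable (U l) (\<lambda>v. Z l v x)"
proof -
  show ?thesis by (rule U.M.integrable_const_bound[where B="4 * \<bar>om l\<bar> * M0"])
    (use Z_bound in \<open>auto simp: measurable_cong_sets[OF sets_U refl]\<close>)
qed

lemma Z2_int: "integrable (U l) (\<lambda>v. (Z l v x)^2)"
proof -
  have "\<bar>(Z l v x)^2\<bar> \<le> (4 * \<bar>om l\<bar> * M0)^2" for v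
    using power_mono[OF Z_bound[of l v x] abs_ge_zero, of 2] by simp
  then show ?thesis by (intro U.M.integrable_const_bound[where B="(4 * \<bar>om l\<bar> * M0)^2"])
    (auto simp: measurable_cong_sets[OF sets_U refl])
qed

lemma Z_mean: "integral\<^sup>L (U l) (\<lambda>v. Z l v x) = 0"
proof -
  show ?thesis unfolding Z_def
    by (subst Bochner_Integration.integral_diff) (use Y_int in \<open>auto simp: c_def U.M.prob_space\<close>)
qed

lemma Z2_le: "integral\<^sup>L (U l) (\<lambda>v. (Z l v x)^2) \<le> integral\<^sup>L (U l) (\<lambda>v. (Y l v x - a)^2)"
proof -
  have eq: "(Y l v x - a)^2 = (Z l v x)^2 + 2 * (c l x - a) * Z l v x + (c l x - a)^2" for v
    unfolding Z_def by (simp add: power2_eq_square algebra_simps)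
  have "integral\<^sup>L (U l) (\<lambda>v. (Y l v x - a)^2)
      = integral\<^sup>L (U l) (\<lambda>v. (Z l v x)^2) + 2 * (c l x - a) * integral\<^sup>L (U l) (\<lambda>v. Z l v x) + (c l x - a)^2"
    unfolding eq using Z2_int Z_int by (simp add: U.M.prob_space)
  then show ?thesis using Z_mean by (simp add: U.M.prob_space)
qed

lemma P_int1: fixes f :: "real \<Rightarrow> real" assumes l: "l \<in> {1..m}" and f: "integrable (U l) f"
  shows "integral\<^sup>L P (\<lambda>\<mu>. f (\<mu> l)) = integral\<^sup>L (U l) f"
proof -
  let ?F = "\<lambda>i. if i = l then f else (\<lambda>_. 1::real)"
  have "integral\<^sup>L P (\<lambda>\<mu>. \<Prod>i\<in>{1..m}. ?F i (\<mu> i)) = (\<Prod>i\<in>{1..m}. integral\<^sup>L (U i) (?F i))"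
    unfolding P_def
    by (rule U.product_integral_prod) (use f in \<open>auto intro: U.M.integrable_const\<close>)
  moreover have "(\<Prod>i\<in>{1..m}. ?F i (\<mu> i)) = f (\<mu> l)" for \<mu>
  proof -
    have "(\<Prod>i\<in>{1..m}. ?F i (\<mu> i)) = (\<Prod>i\<in>{1..m}. if i = l then f (\<mu> i) else 1)"
      by (rule prod.cong) auto
    then show ?thesis using l by (simp only: prod.delta finite_atLeastAtMost) simp
  qed
  moreover have "(\<Prod>i\<in>{1..m}. integral\<^sup>L (U i) (?F i)) = integral\<^sup>L (U l) f"
  proof -
    have "(\<Prod>i\<in>{1..m}. integral\<^sup>L (U i) (?F i)) = (\<Prod>i\<in>{1..m}. if i = l then integral\<^sup>L (U i) f else 1)"
      by (rule prod.cong) (auto simp: U.M.prob_space)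
    then show ?thesis using l by (simp only: prod.delta finite_atLeastAtMost) simp
  qed
  ultimately show ?thesis by simp
qed

lemma P_int2: fixes f g :: "real \<Rightarrow> real" assumes l: "l \<in> {1..m}" and k: "k \<in> {1..m}" and lk: "l \<noteq> k"
  and f: "integrable (U l) f" and g: "integrable (U k) g"
  shows "integral\<^sup>L P (\<lambda>\<mu>. f (\<mu> l) * g (\<mu> k)) = integral\<^sup>L (U l) f * integral\<^sup>L (U k) g"
proof -
  let ?F = "\<lambda>i. if i = l then f else if i = k then g else (\<lambda>_. 1::real)"
  have "integral\<^sup>L P (\<lambda>\<mu>. \<Prod>i\<in>{1..m}. ?F i (\<mu> i)) = (\<Prod>i\<in>{1..m}. integral\<^sup>L (U i) (?F i))"
    unfolding P_def
    by (rule U.product_integral_prod) (use f g in \<open>auto intro: U.M.integrable_const\<close>)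
  moreover have k': "k \<in> {1..m} - {l}" using k lk by auto
  moreover have "(\<Prod>i\<in>{1..m}. ?F i (\<mu> i)) = f (\<mu> l) * g (\<mu> k)" for \<mu>
  proof -
    have "(\<Prod>i\<in>{1..m}. ?F i (\<mu> i)) = (\<Prod>i\<in>{1..m}. (if i = l then f (\<mu> i) else 1) * (if i = k then g (\<mu> i) else 1))"
      by (rule prod.cong) (use lk in auto)
    then show ?thesis using l k by (simp only: prod.distrib prod.delta finite_atLeastAtMost) simp
  qed
  moreover have "(\<Prod>i\<in>{1..m}. integral\<^sup>L (U i) (?F i)) = integral\<^sup>L (U l) f * integral\<^sup>L (U k) g"
  proof -
    have "(\<Prod>i\<in>{1..m}. integral\<^sup>L (U i) (?F i)) = (\<Prod>i\<in>{1..m}. (if i = l then integral\<^sup>L (U i) f else 1) * (if i = k then integral\<^sup>L (U i) g else 1))"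
      by (rule prod.cong) (use lk in \<open>auto simp: U.M.prob_space\<close>)
    then show ?thesis using l k by (simp only: prod.distrib prod.delta finite_atLeastAtMost) simp
  qed
  ultimately show ?thesis by simp
qed

lemma db_bound: "\<bar>db \<mu> x\<bar> \<le> (\<Sum>l\<in>{1..m}. 4 * \<bar>om l\<bar> * M0)"
  unfolding db_def by (rule order_trans[OF sum_abs sum_mono]) (rule Z_bound)

lemma E_db2: "integral\<^sup>L P (\<lambda>\<mu>. (db \<mu> x)^2) = (\<Sum>l\<in>{1..m}. integral\<^sup>L (U l) (\<lambda>v. (Z l v x)^2))"
proof -
  interpret prob_space P by (rule P_prob)
  have intlk: "integrable P (\<lambda>\<mu>. Z l (\<mu> l) x * Z k (\<mu> k) x)" if "l \<in> {1..m}" "k \<in> {1..m}" for l k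
  proof (rule integrable_const_bound[where B="(4 * \<bar>om l\<bar> * M0) * (4 * \<bar>om k\<bar> * M0)"])
    show "AE \<mu> in P. norm (Z l (\<mu> l) x * Z k (\<mu> k) x) \<le> (4 * \<bar>om l\<bar> * M0) * (4 * \<bar>om k\<bar> * M0)"
    proof (intro AE_I2)
      fix \<mu>
      have "\<bar>Z l (\<mu> l) x\<bar> * \<bar>Z k (\<mu> k) x\<bar> \<le> (4 * \<bar>om l\<bar> * M0) * (4 * \<bar>om k\<bar> * M0)"
        by (intro mult_mono Z_bound) (auto simp: M0_nonneg)
      then show "norm (Z l (\<mu> l) x * Z k (\<mu> k) x) \<le> (4 * \<bar>om l\<bar> * M0) * (4 * \<bar>om k\<bar> * M0)"
        by (simp add: abs_mult)
    qed
    show "(\<lambda>\<mu>. Z l (\<mu> l) x * Z k (\<mu> k) x) \<in> borel_measurable P" using that by measurable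
  qed
  have "integral\<^sup>L P (\<lambda>\<mu>. (db \<mu> x)^2)
     = integral\<^sup>L P (\<lambda>\<mu>. \<Sum>l\<in>{1..m}. \<Sum>k\<in>{1..m}. Z l (\<mu> l) x * Z k (\<mu> k) x)"
    unfolding db_def power2_eq_square sum_product ..
  also have "\<dots> = (\<Sum>l\<in>{1..m}. \<Sum>k\<in>{1..m}. integral\<^sup>L P (\<lambda>\<mu>. Z l (\<mu> l) x * Z k (\<mu> k) x))"
  proof -
    have "integral\<^sup>L P (\<lambda>\<mu>. \<Sum>l\<in>{1..m}. \<Sum>k\<in>{1..m}. Z l (\<mu> l) x * Z k (\<mu> k) x)
       = (\<Sum>l\<in>{1..m}. integral\<^sup>L P (\<lambda>\<mu>. \<Sum>k\<in>{1..m}. Z l (\<mu> l) x * Z k (\<mu> k) x))"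
      by (rule Bochner_Integration.integral_sum) (intro Bochner_Integration.integrable_sum intlk, auto)
    also have "\<dots> = (\<Sum>l\<in>{1..m}. \<Sum>k\<in>{1..m}. integral\<^sup>L P (\<lambda>\<mu>. Z l (\<mu> l) x * Z k (\<mu> k) x))"
      by (intro sum.cong refl Bochner_Integration.integral_sum intlk) auto
    finally show ?thesis .
  qed
  also have "\<dots> = (\<Sum>l\<in>{1..m}. \<Sum>k\<in>{1..m}. if k = l then integral\<^sup>L (U l) (\<lambda>v. (Z l v x)^2) else 0)"
  proof (intro sum.cong refl)
    fix l k assume l: "l \<in> {1..m}" and k: "k \<in> {1..m}"
    show "integral\<^sup>L P (\<lambda>\<mu>. Z l (\<mu> l) x * Z k (\<mu> k) x)
        = (if k = l then integral\<^sup>L (U l) (\<lambda>v. (Z l v x)^2) else 0)"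
    proof (cases "k = l")
      case True
      then show ?thesis using P_int1[OF l Z2_int, of x] by (simp add: power2_eq_square)
    next
      case False
      then show ?thesis using P_int2[OF l k _ Z_int Z_int, of x x] Z_mean by simp
    qed
  qed
  also have "\<dots> = (\<Sum>l\<in>{1..m}. integral\<^sup>L (U l) (\<lambda>v. (Z l v x)^2))"
    by (simp add: sum.delta)
  finally show ?thesis .
qed

end


context ctx3 begin

definition "DR l x = Ef (gR x) (- t (l - 1)) - Ef (gR x) (- t l)"
definition "DL l x = Ef (gL x) (- t (l - 1)) - Ef (gL x) (- t l)"
definition "NN = real (2 * m)"
definition "KK = 16 * ab"
definition "phi g = 2 * KK / (NN * g + KK)"

lemma NN_pos: "0 < NN" using m1 by (simp add: NN_def)
lemma KK_pos: "0 < KK" using ab_pos by (simp add: KK_def)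

lemma pq: assumes l: "l \<in> {1..m}"
  shows "0 \<le> - t l" "- t l < - t (l - 1)" "- t (l - 1) \<le> 1"
  using t_range[of l] t_range[of "l-1"] tmono[OF l] l d0 by auto

lemma Ef_diff: assumes g: "0 \<le> g" and l: "l \<in> {1..m}" and v: "v \<in> S l"
  shows "\<bar>Ef g (- v) - Ef g (- t (l - 1))\<bar> \<le> Ef g (- t (l - 1)) - Ef g (- t l)"
proof -
  have "- t l < - v" "- v \<le> - t (l - 1)" using v by (auto simp: S_def)
  then have "Ef g (- t l) \<le> Ef g (- v)" "Ef g (- v) \<le> Ef g (- t (l - 1))"
    using Ef_mono[OF g] by auto
  then show ?thesis by linarith
qed

lemma lip_diff:
  assumes "L-lipschitz_on A f" "a \<in> A" "b \<in> A"
  shows "\<bar>f a - f b\<bar> \<le> L * \<bar>a - b\<bar>"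
  using lipschitz_onD[OF assms] by (simp add: dist_real_def)

lemma prod_diff: "\<bar>A * u - B * w\<bar> \<le> \<bar>A - B\<bar> * \<bar>u\<bar> + \<bar>B\<bar> * \<bar>u - w\<bar>" for A B u w :: real
proof -
  have "A * u - B * w = (A - B) * u + B * (u - w)" by (simp add: algebra_simps)
  then show ?thesis by (metis abs_mult abs_triangle_ineq)
qed

lemma DR_nonneg: assumes x: "x \<in> {xL..xR}" and l: "l \<in> {1..m}" shows "0 \<le> DR l x"
  using Ef_mono[OF gR_nonneg[OF x], of "- t l" "- t (l-1)"] tmono[OF l] by (simp add: DR_def)
lemma DL_nonneg: assumes x: "x \<in> {xL..xR}" and l: "l \<in> {1..m}" shows "0 \<le> DL l x"
  using Ef_mono[OF gL_nonneg[OF x], of "- t l" "- t (l-1)"] tmono[OF l] by (simp add: DL_def)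

lemma bb_diff_R: assumes l: "l \<in> {1..m}" and v: "v \<in> S l" and x: "x \<in> {xL..xR}"
  shows "\<bar>bb v x - bb (t (l - 1)) x\<bar> \<le> M0 * DR l x + LR * hh l"
proof -
  have a: "t (l - 1) \<in> S l" using tmono[OF l] by (auto simp: S_def)
  have vS: "v \<in> {-1..<0}" "t (l - 1) \<in> {-1..<0}" using S_sub[OF l] v a d0 by force+
  have g: "0 \<le> gR x" using gR_nonneg[OF x] .
  have "\<bar>bb v x - bb (t (l - 1)) x\<bar>
     = \<bar>Ef (gR x) (- v) * \<psi>R v - Ef (gR x) (- t (l - 1)) * \<psi>R (t (l - 1))\<bar>"
    using bfun_neg(2)[OF vS(1) x] bfun_neg(2)[OF vS(2) x] by simp
  also have "\<dots> \<le> \<bar>Ef (gR x) (- v) - Ef (gR x) (- t (l - 1))\<bar> * \<bar>\<psi>R v\<bar>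
      + \<bar>Ef (gR x) (- t (l - 1))\<bar> * \<bar>\<psi>R v - \<psi>R (t (l - 1))\<bar>" by (rule prod_diff)
  also have "\<dots> \<le> DR l x * M0 + 1 * (LR * hh l)"
  proof (intro add_mono mult_mono)
    show "\<bar>Ef (gR x) (- v) - Ef (gR x) (- t (l - 1))\<bar> \<le> DR l x"
      unfolding DR_def by (rule Ef_diff[OF g l v])
    show "\<bar>\<psi>R v\<bar> \<le> M0" using M0R vS by auto
    show "\<bar>Ef (gR x) (- t (l - 1))\<bar> \<le> 1" using Ef_le1[OF g] Ef_nonneg by (simp del: Ef_def)
    have "\<bar>\<psi>R v - \<psi>R (t (l - 1))\<bar> \<le> LR * \<bar>v - t (l - 1)\<bar>" by (rule lip_diff[OF lipR vS])
    also have "\<dots> \<le> LR * hh l" using v LR_nonneg by (intro mult_left_mono) (auto simp: S_def hh_def)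
    finally show "\<bar>\<psi>R v - \<psi>R (t (l - 1))\<bar> \<le> LR * hh l" .
    show "0 \<le> DR l x" using DR_nonneg[OF x l] .
  qed (auto simp: M0_nonneg)
  finally show ?thesis by (simp add: mult.commute)
qed

lemma bb_diff_L: assumes l: "l \<in> {1..m}" and v: "v \<in> S l" and x: "x \<in> {xL..xR}"
  shows "\<bar>bb (- v) x - bb (- t (l - 1)) x\<bar> \<le> M0 * DL l x + LL * hh l"
proof -
  have a: "t (l - 1) \<in> S l" using tmono[OF l] by (auto simp: S_def)
  have vS: "- v \<in> {0<..1}" "- t (l - 1) \<in> {0<..1}" using S_sub[OF l] v a d0 by force+
  have g: "0 \<le> gL x" using gL_nonneg[OF x] .
  have "\<bar>bb (- v) x - bb (- t (l - 1)) x\<bar>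
     = \<bar>Ef (gL x) (- v) * \<psi>L (- v) - Ef (gL x) (- t (l - 1)) * \<psi>L (- t (l - 1))\<bar>"
    using bfun_pos(2)[OF vS(1) x] bfun_pos(2)[OF vS(2) x] by simp
  also have "\<dots> \<le> \<bar>Ef (gL x) (- v) - Ef (gL x) (- t (l - 1))\<bar> * \<bar>\<psi>L (- v)\<bar>
      + \<bar>Ef (gL x) (- t (l - 1))\<bar> * \<bar>\<psi>L (- v) - \<psi>L (- t (l - 1))\<bar>" by (rule prod_diff)
  also have "\<dots> \<le> DL l x * M0 + 1 * (LL * hh l)"
  proof (intro add_mono mult_mono)
    show "\<bar>Ef (gL x) (- v) - Ef (gL x) (- t (l - 1))\<bar> \<le> DL l x"
      unfolding DL_def by (rule Ef_diff[OF g l v])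
    show "\<bar>\<psi>L (- v)\<bar> \<le> M0" using M0L vS by auto
    show "\<bar>Ef (gL x) (- t (l - 1))\<bar> \<le> 1" using Ef_le1[OF g] Ef_nonneg by (simp del: Ef_def)
    have "\<bar>\<psi>L (- v) - \<psi>L (- t (l - 1))\<bar> \<le> LL * \<bar>- v - - t (l - 1)\<bar>" by (rule lip_diff[OF lipL vS])
    also have "\<dots> \<le> LL * hh l" using v LL_nonneg by (intro mult_left_mono) (auto simp: S_def hh_def)
    finally show "\<bar>\<psi>L (- v) - \<psi>L (- t (l - 1))\<bar> \<le> LL * hh l" .
    show "0 \<le> DL l x" using DL_nonneg[OF x l] .
  qed (auto simp: M0_nonneg)
  finally show ?thesis by (simp add: mult.commute)
qed


lemma sq_sum_le: "(a + b)^2 \<le> 2 * a^2 + 2 * b^2" for a b :: real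
proof -
  have "0 \<le> (a - b)^2" by simp
  then show ?thesis by (simp add: power2_eq_square algebra_simps)
qed

definition "LS = LL + LR"
definition "Bl l x = om l ^ 2 * (4 * M0^2 * (DR l x ^ 2 + DL l x ^ 2) + 2 * LS^2 * hh l ^ 2)"

lemma Y_diff: assumes l: "l \<in> {1..m}" and v: "v \<in> S l" and x: "x \<in> {xL..xR}"
  shows "(Y l v x - Y l (t (l - 1)) x)^2 \<le> Bl l x"
proof -
  have "\<bar>(bb v x - bb (t (l - 1)) x) + (bb (- v) x - bb (- t (l - 1)) x)\<bar>
      \<le> M0 * (DR l x + DL l x) + LS * hh l"
    using bb_diff_R[OF l v x] bb_diff_L[OF l v x] unfolding LS_def by (simp add: algebra_simps)
  moreover have "Y l v x - Y l (t (l - 1)) x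
     = om l * ((bb v x - bb (t (l - 1)) x) + (bb (- v) x - bb (- t (l - 1)) x))"
    by (simp add: Y_def algebra_simps)
  ultimately have "\<bar>Y l v x - Y l (t (l - 1)) x\<bar> \<le> om l * (M0 * (DR l x + DL l x) + LS * hh l)"
    using om_pos[OF l] by (simp add: abs_mult mult_left_mono)
  then have "(Y l v x - Y l (t (l - 1)) x)^2 \<le> (om l * (M0 * (DR l x + DL l x) + LS * hh l))^2"
    by (metis abs_le_square_iff abs_le_D2 abs_of_nonneg linorder_not_le order.trans abs_ge_zero
        less_le_not_le)
  also have "\<dots> = om l ^ 2 * (M0 * (DR l x + DL l x) + LS * hh l)^2" by (simp add: power_mult_distrib)
  also have "\<dots> \<le> Bl l x" unfolding Bl_def
  proof (rule mult_left_mono)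
    have "(M0 * (DR l x + DL l x) + LS * hh l)^2 \<le> 2 * (M0 * (DR l x + DL l x))^2 + 2 * (LS * hh l)^2"
      by (rule sq_sum_le)
    also have "(M0 * (DR l x + DL l x))^2 \<le> M0^2 * (2 * (DR l x ^ 2 + DL l x ^ 2))"
      unfolding power_mult_distrib by (intro mult_left_mono) (use sq_sum_le[of "DR l x" "DL l x"] in auto)
    finally show "(M0 * (DR l x + DL l x) + LS * hh l)^2 \<le> 4 * M0^2 * (DR l x ^ 2 + DL l x ^ 2) + 2 * LS^2 * hh l ^ 2"
      by (simp add: power_mult_distrib algebra_simps)
  qed simp
  finally show ?thesis .
qed

end


context ctx3 begin

lemma Z2_bound: assumes l: "l \<in> {1..m}" and x: "x \<in> {xL..xR}"
  shows "integral\<^sup>L (U l) (\<lambda>v. (Z l v x)^2) \<le> Bl l x"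
proof -
  let ?a = "Y l (t (l - 1)) x"
  have "integral\<^sup>L (U l) (\<lambda>v. (Z l v x)^2) \<le> integral\<^sup>L (U l) (\<lambda>v. (Y l v x - ?a)^2)"
    by (rule Z2_le)
  also have "\<dots> \<le> integral\<^sup>L (U l) (\<lambda>v. Bl l x)"
  proof (rule integral_mono_AE')
    show "integrable (U l) (\<lambda>v. Bl l x)" by simp
    have "AE v in U l. v \<in> S l"
      unfolding U_def using l S_props[OF l] by (auto intro!: AE_uniform_measureI)
    then show "AE v in U l. (Y l v x - ?a)^2 \<le> Bl l x"
      by eventually_elim (rule Y_diff[OF l _ x])
    then show "AE v in U l. 0 \<le> Bl l x" by eventually_elim (rule order_trans[OF zero_le_power2])
  qed
  also have "\<dots> = Bl l x" by (simp add: U.M.prob_space)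
  finally show ?thesis .
qed

lemma D_le_phi: assumes g: "0 \<le> g" and l: "l \<in> {1..m}"
  shows "Ef g (- t (l - 1)) - Ef g (- t l) \<le> phi g"
proof (cases "KK \<le> NN * g")
  case True
  then have gp: "0 < g" using KK_pos NN_pos g by (cases "g = 0") auto
  have "Ef g (- t (l - 1)) - Ef g (- t l) \<le> 8 * (- t (l - 1) - - t l) / g"
    by (rule Ef_lip[OF gp]) (use pq[OF l] in auto)
  also have "8 * (- t (l - 1) - - t l) = 8 * hh l" by (simp add: hh_def)
  also have "8 * hh l \<le> KK / NN"
  proof -
    have "8 * hh l \<le> 16 * om l" using hh_le[OF l] by simp
    also have "\<dots> \<le> 16 * (ab / (2 * m))" using om_le[OF l] by simp
    finally show ?thesis by (simp add: KK_def NN_def)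
  qed
  then have "8 * hh l / g \<le> KK / NN / g" using gp by (intro divide_right_mono) auto
  also have "KK / NN / g \<le> phi g"
    unfolding phi_def using True KK_pos NN_pos gp by (simp add: field_simps)
  finally show ?thesis .
next
  case False
  have "Ef g (- t (l - 1)) - Ef g (- t l) \<le> 1" using Ef_le1[OF g] Ef_nonneg[of g] by smt
  also have "1 \<le> phi g"
  proof -
    have p: "0 < NN * g + KK" using KK_pos NN_pos g by (simp add: add_nonneg_pos)
    have "NN * g + KK \<le> 2 * KK" using False by simp
    then show ?thesis unfolding phi_def using p by (simp add: field_simps)
  qed
  finally show ?thesis .
qed

lemma sumD2: assumes g: "0 \<le> g"
  shows "(\<Sum>l\<in>{1..m}. (Ef g (- t (l - 1)) - Ef g (- t l))^2) \<le> phi g"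
proof -
  let ?D = "\<lambda>l. Ef g (- t (l - 1)) - Ef g (- t l)"
  have Dn: "0 \<le> ?D l" if l: "l \<in> {1..m}" for l
    using Ef_mono[OF g, of "- t l" "- t (l-1)"] tmono[OF l] by simp
  have "(\<Sum>l\<in>{1..m}. (?D l)^2) \<le> (\<Sum>l\<in>{1..m}. ?D l * phi g)"
    by (intro sum_mono) (use Dn D_le_phi[OF g] in \<open>auto simp: power2_eq_square intro!: mult_left_mono\<close>)
  also have "\<dots> = (\<Sum>l\<in>{1..m}. ?D l) * phi g" by (simp add: sum_distrib_right)
  also have "(\<Sum>l\<in>{1..m}. ?D l) = Ef g (- t 0) - Ef g (- t m)"
    using sum_telescope_1[of "\<lambda>l. Ef g (- t l)" m] by simp
  also have "\<dots> \<le> 1" using Ef_le1[OF g] Ef_nonneg[of g] by smt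
  then have "(Ef g (- t 0) - Ef g (- t m)) * phi g \<le> 1 * phi g"
    using KK_pos NN_pos g by (intro mult_right_mono) (auto simp: phi_def)
  finally show ?thesis by simp
qed

lemma E_db2_bound: assumes x: "x \<in> {xL..xR}"
  shows "integral\<^sup>L P (\<lambda>\<mu>. (db \<mu> x)^2)
    \<le> 4 * M0^2 * (ab / NN)^2 * (phi (gR x) + phi (gL x)) + 4 * LS^2 * (ab / NN)^3"
proof -
  have omb: "om l \<le> ab / NN" "0 \<le> om l" if "l \<in> {1..m}" for l
    using om_le[OF that] om_pos[OF that] by (auto simp: NN_def)
  have om2: "om l ^ 2 \<le> (ab / NN)^2" if "l \<in> {1..m}" for l
    using omb[OF that] by (intro power_mono) auto
  have s1: "(\<Sum>l\<in>{1..m}. om l ^ 2 * (DR l x ^ 2 + DL l x ^ 2))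
      \<le> (ab / NN)^2 * (phi (gR x) + phi (gL x))"
  proof -
    have "(\<Sum>l\<in>{1..m}. om l ^ 2 * (DR l x ^ 2 + DL l x ^ 2))
        \<le> (\<Sum>l\<in>{1..m}. (ab / NN)^2 * (DR l x ^ 2 + DL l x ^ 2))"
      by (intro sum_mono mult_right_mono om2) auto
    also have "\<dots> = (ab / NN)^2 * ((\<Sum>l\<in>{1..m}. DR l x ^ 2) + (\<Sum>l\<in>{1..m}. DL l x ^ 2))"
      by (simp add: sum_distrib_left[symmetric] sum.distrib distrib_left)
    also have "\<dots> \<le> (ab / NN)^2 * (phi (gR x) + phi (gL x))"
      using sumD2[OF gR_nonneg[OF x]] sumD2[OF gL_nonneg[OF x]]
      by (intro mult_left_mono add_mono) (auto simp: DR_def DL_def)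
    finally show ?thesis .
  qed
  have s2: "(\<Sum>l\<in>{1..m}. om l ^ 2 * hh l ^ 2) \<le> 2 * (ab / NN)^3"
  proof -
    have "(\<Sum>l\<in>{1..m}. om l ^ 2 * hh l ^ 2) \<le> (\<Sum>l\<in>{1..m}. 4 * (ab / NN)^3 * om l)"
    proof (intro sum_mono)
      fix l assume l: "l \<in> {1..m}"
      have "hh l ^ 2 \<le> (2 * om l)^2" using hh_le[OF l] hh_pos[OF l] by (intro power_mono) auto
      then have "om l ^ 2 * hh l ^ 2 \<le> om l ^ 2 * (2 * om l)^2" by (intro mult_left_mono) auto
      also have "\<dots> = 4 * om l ^ 3 * om l" by (simp add: power2_eq_square power3_eq_cube)
      also have "\<dots> \<le> 4 * (ab / NN)^3 * om l"
        using omb[OF l] by (intro mult_right_mono mult_left_mono power_mono) auto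
      finally show "om l ^ 2 * hh l ^ 2 \<le> 4 * (ab / NN)^3 * om l" .
    qed
    also have "\<dots> = 4 * (ab / NN)^3 * (1/2)" by (simp only: sum_distrib_left[symmetric] sum_om)
    finally show ?thesis by simp
  qed
  have "integral\<^sup>L P (\<lambda>\<mu>. (db \<mu> x)^2) \<le> (\<Sum>l\<in>{1..m}. Bl l x)"
    unfolding E_db2 by (intro sum_mono Z2_bound x)
  also have "\<dots> = 4 * M0^2 * (\<Sum>l\<in>{1..m}. om l ^ 2 * (DR l x ^ 2 + DL l x ^ 2))
      + 2 * LS^2 * (\<Sum>l\<in>{1..m}. om l ^ 2 * hh l ^ 2)"
    unfolding Bl_def by (simp add: sum_distrib_left sum.distrib algebra_simps)
  also have "\<dots> \<le> 4 * M0^2 * ((ab / NN)^2 * (phi (gR x) + phi (gL x))) + 2 * LS^2 * (2 * (ab / NN)^3)"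
    by (intro add_mono mult_left_mono s1 s2) auto
  finally show ?thesis by simp
qed

end


context ctx3 begin

definition "X = uniform_measure lborel {xL..xR}"
definition "len = xR - xL"
definition "sc x = \<sigma> (cl x)"
definition "H \<mu> x = sc x * (db \<mu> x)^2"
definition "Nf \<mu> = sqrt (len * integral\<^sup>L X (\<lambda>x. H \<mu> x))"
definition "Bdb = (\<Sum>l\<in>{1..m}. 4 * \<bar>om l\<bar> * M0)"

lemma len_pos: "0 < len" using xLR by (simp add: len_def)

lemma X_props: "prob_space X" "sets X = sets borel"
  unfolding X_def using uniform_lborel_prob[OF uniform_Icc(1-3)[OF xLR]] by auto

lemma sets_X[measurable_cong]: "sets X = sets borel" by (rule X_props(2))

lemma sc_cont: "continuous_on UNIV sc"
  unfolding sc_def[abs_def] by (rule continuous_on_compose2[OF scont cl_cont]) (use cl_in in auto)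
lemma sc_meas[measurable]: "sc \<in> borel_measurable borel"
  by (rule borel_measurable_continuous_onI[OF sc_cont])
lemma sc_bnd: "s0 \<le> sc x" "sc x \<le> s1" using sbnd[OF cl_in[of x]] by (auto simp: sc_def)

lemma c_meas[measurable]: "(\<lambda>x. c l x) \<in> borel_measurable borel"
proof -
  have "(\<lambda>z. Y l (snd z) (fst z)) \<in> borel_measurable (borel \<Otimes>\<^sub>M U l)"
    by (intro Y_meas) (auto simp: measurable_cong_sets[OF refl sets_U])
  then have "case_prod (\<lambda>x v. Y l v x) \<in> borel_measurable (borel \<Otimes>\<^sub>M U l)"
    by (simp add: case_prod_beta')
  then show ?thesis unfolding c_def[abs_def] by (rule U.M.borel_measurable_lebesgue_integral)
qed

lemma Zj_meas[measurable]:
  assumes [measurable]: "f \<in> borel_measurable N" "g \<in> borel_measurable N"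
  shows "(\<lambda>z. Z l (f z) (g z)) \<in> borel_measurable N"
  unfolding Z_def by measurable

lemma H_meas1: "(\<lambda>z. H (snd z) (fst z)) \<in> borel_measurable (X \<Otimes>\<^sub>M P)"
proof -
  have [measurable]: "(\<lambda>z. snd z l) \<in> borel_measurable (X \<Otimes>\<^sub>M P)" if "l \<in> {1..m}" for l
    by (rule measurable_compose[OF measurable_snd comp_meas[OF that]])
  have [measurable]: "fst \<in> borel_measurable (X \<Otimes>\<^sub>M P)"
    using measurable_fst[of X P] by (simp add: measurable_cong_sets[OF refl sets_X])
  show ?thesis unfolding H_def db_def by measurable
qed

lemma H_meas2: "(\<lambda>z. H (fst z) (snd z)) \<in> borel_measurable (P \<Otimes>\<^sub>M X)"
proof -
  have [measurable]: "(\<lambda>z. fst z l) \<in> borel_measurable (P \<Otimes>\<^sub>M X)" if "l \<in> {1..m}" for l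
    by (rule measurable_compose[OF measurable_fst comp_meas[OF that]])
  have [measurable]: "snd \<in> borel_measurable (P \<Otimes>\<^sub>M X)"
    using measurable_snd[of P X] by (simp add: measurable_cong_sets[OF refl sets_X])
  show ?thesis unfolding H_def db_def by measurable
qed

lemma H_bnd: "0 \<le> H \<mu> x" "H \<mu> x \<le> s1 * Bdb^2"
proof -
  show "0 \<le> H \<mu> x" using sc_bnd[of x] s0pos by (simp add: H_def)
  have "(db \<mu> x)^2 \<le> Bdb^2"
    using power_mono[OF db_bound[of \<mu> x] abs_ge_zero, of 2] by (simp add: Bdb_def)
  then show "H \<mu> x \<le> s1 * Bdb^2" unfolding H_def
    using sc_bnd[of x] s0pos by (intro mult_mono) auto
qed

lemma Fub: "integral\<^sup>L P (\<lambda>\<mu>. integral\<^sup>L X (\<lambda>x. H \<mu> x)) = integral\<^sup>L X (\<lambda>x. integral\<^sup>L P (\<lambda>\<mu>. H \<mu> x))"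
proof -
  interpret XP: pair_sigma_finite X P
    using X_props(1) P_prob by (intro pair_sigma_finite.intro prob_space_imp_sigma_finite)
  interpret pp: prob_space "X \<Otimes>\<^sub>M P" by (rule prob_space_pair[OF X_props(1) P_prob])
  have "integrable (X \<Otimes>\<^sub>M P) (case_prod (\<lambda>x \<mu>. H \<mu> x))"
  proof (rule pp.integrable_const_bound[where B="s1 * Bdb^2"])
    show "AE z in X \<Otimes>\<^sub>M P. norm (case_prod (\<lambda>x \<mu>. H \<mu> x) z) \<le> s1 * Bdb^2"
      using H_bnd by (auto simp: split_beta')
    show "case_prod (\<lambda>x \<mu>. H \<mu> x) \<in> borel_measurable (X \<Otimes>\<^sub>M P)"
      using H_meas1 by (simp add: split_beta')
  qed
  then show ?thesis by (rule XP.Fubini_integral)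
qed

end


lemma ftc_Q:
  fixes a K C1 C2 xL xR :: real
  assumes a: "a > 0" and K: "K > 0" and lr: "xL \<le> xR"
  shows "((\<lambda>x. C1 * (2*K/(a*(xR-x)+K) + 2*K/(a*(x-xL)+K)) + C2) has_integral
     (C1 * (4*K/a) * (ln (a*(xR-xL)+K) - ln K) + C2*(xR-xL))) {xL..xR}"
proof -
  define A where "A x = C1*(2*K/a)*(ln (a*(x-xL)+K) - ln (a*(xR-x)+K)) + C2*x" for x
  have d: "(A has_vector_derivative (C1 * (2*K/(a*(xR-x)+K) + 2*K/(a*(x-xL)+K)) + C2)) (at x within {xL..xR})"
    if x: "x \<in> {xL..xR}" for x
  proof -
    have p1: "0 < a*(x-xL)+K" "0 < a*(xR-x)+K" using x a K by (auto intro: add_nonneg_pos)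
    have "(A has_real_derivative (C1*(2*K/a)*(a/(a*(x-xL)+K) - (-a)/(a*(xR-x)+K)) + C2)) (at x)"
      unfolding A_def[abs_def] using p1 a
      by (auto intro!: derivative_eq_intros)
    moreover have "C1*(2*K/a)*(a/(a*(x-xL)+K) - (-a)/(a*(xR-x)+K)) + C2
        = C1 * (2*K/(a*(xR-x)+K) + 2*K/(a*(x-xL)+K)) + C2"
    proof -
      have e1: "(2*K/a)*(a/(a*(x-xL)+K)) = 2*K/(a*(x-xL)+K)" using a by simp
      have e2: "(2*K/a)*((-a)/(a*(xR-x)+K)) = -(2*K/(a*(xR-x)+K))" using a by simp
      show ?thesis unfolding right_diff_distrib mult.assoc[symmetric]
        using e1 e2 a by (simp add: algebra_simps)
    qed
    ultimately show ?thesis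
      by (simp add: has_real_derivative_iff_has_vector_derivative[symmetric] has_field_derivative_at_within)
  qed
  have "A xR - A xL = C1 * (4*K/a) * (ln (a*(xR-xL)+K) - ln K) + C2*(xR-xL)"
    unfolding A_def using a by (simp add: field_simps)
  then show ?thesis using fundamental_theorem_of_calculus[OF lr d] by simp
qed

context ctx3 begin

definition "Q x = 4*M0^2*(ab/NN)^2*(phi (s0*(xR-x)) + phi (s0*(x-xL))) + 4*LS^2*(ab/NN)^3"

lemma phi_anti: "0 \<le> g \<Longrightarrow> g \<le> g' \<Longrightarrow> phi g' \<le> phi g"
  unfolding phi_def using KK_pos NN_pos
  by (intro divide_left_mono add_right_mono mult_left_mono mult_pos_pos add_nonneg_pos) auto

lemma phi_nonneg: "0 \<le> g \<Longrightarrow> 0 \<le> phi g"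
  unfolding phi_def using KK_pos NN_pos by (auto intro!: divide_nonneg_pos add_nonneg_pos)

lemma Q_nonneg: "x \<in> {xL..xR} \<Longrightarrow> 0 \<le> Q x"
  unfolding Q_def using s0pos ab_pos NN_pos by (auto intro!: add_nonneg_nonneg mult_nonneg_nonneg phi_nonneg)

lemma Q_cont: "continuous_on {xL..xR} Q"
proof -
  have "continuous_on {xL..xR} (\<lambda>x. phi (s0*(xR-x)))" "continuous_on {xL..xR} (\<lambda>x. phi (s0*(x-xL)))"
    unfolding phi_def using KK_pos NN_pos s0pos
    by (auto intro!: continuous_intros simp: add_nonneg_pos add_pos_nonneg) (smt (verit) mult_nonneg_nonneg)+
  then show ?thesis unfolding Q_def by (intro continuous_intros)
qed

lemma Bnd_le_Q: assumes x: "x \<in> {xL..xR}"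
  shows "integral\<^sup>L P (\<lambda>\<mu>. H \<mu> x) \<le> s1 * Q x"
proof -
  interpret prob_space P by (rule P_prob)
  have "integral\<^sup>L P (\<lambda>\<mu>. H \<mu> x) = sc x * integral\<^sup>L P (\<lambda>\<mu>. (db \<mu> x)^2)"
    unfolding H_def by simp
  also have "\<dots> \<le> s1 * (4 * M0^2 * (ab / NN)^2 * (phi (gR x) + phi (gL x)) + 4 * LS^2 * (ab / NN)^3)"
    using sc_bnd[of x] s0pos E_db2_bound[OF x]
    by (intro mult_mono) (auto intro!: integral_nonneg_AE)
  also have "\<dots> \<le> s1 * Q x" unfolding Q_def
    using s1_pos gR_ge[OF x] gL_ge[OF x] sbnd gR_nonneg[OF x] gL_nonneg[OF x] x s0pos
    by (intro mult_left_mono add_mono order_refl mult_left_mono phi_anti)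
       (auto simp: mult.commute)
  finally show ?thesis .
qed

end


context ctx3 begin

lemma X_integral:
  assumes f: "f \<in> borel_measurable borel" and b: "\<And>x. x \<in> {xL..xR} \<Longrightarrow> \<bar>f x\<bar> \<le> B"
  shows "integral\<^sup>L X f = integral {xL..xR} f / len"
proof -
  have si: "set_integrable lborel {xL..xR} f"
    by (rule set_integrable_bounded[OF _ _ f b]) (use xLR in auto)
  show ?thesis unfolding X_def
    using uniform_lborel_integral[OF uniform_Icc(1-3)[OF xLR] f] set_borel_integral_eq_integral(2)[OF si]
      uniform_Icc(4)[OF xLR] by (simp add: len_def)
qed

lemma H_meas_x[measurable]: "(\<lambda>x. H \<mu> x) \<in> borel_measurable borel"
  unfolding H_def db_def by measurable

lemma H_abs: "\<bar>H \<mu> x\<bar> \<le> s1 * Bdb^2" using H_bnd[of \<mu> x] by simp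

lemma IX_bnd: "0 \<le> integral\<^sup>L X (\<lambda>x. H \<mu> x)" "integral\<^sup>L X (\<lambda>x. H \<mu> x) \<le> s1 * Bdb^2"
proof -
  interpret prob_space X by (rule X_props(1))
  show "0 \<le> integral\<^sup>L X (\<lambda>x. H \<mu> x)" using H_bnd by (simp add: integral_nonneg_AE)
  have "integral\<^sup>L X (\<lambda>x. H \<mu> x) \<le> integral\<^sup>L X (\<lambda>x. s1 * Bdb^2)"
    by (intro integral_mono_AE') (use H_bnd s1_pos in auto)
  then show "integral\<^sup>L X (\<lambda>x. H \<mu> x) \<le> s1 * Bdb^2" by (simp add: prob_space)
qed

lemma IX_meas[measurable]: "(\<lambda>\<mu>. integral\<^sup>L X (\<lambda>x. H \<mu> x)) \<in> borel_measurable P"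
proof -
  interpret Xs: sigma_finite_measure X by (rule prob_space_imp_sigma_finite[OF X_props(1)])
  have "case_prod (\<lambda>\<mu> x. H \<mu> x) \<in> borel_measurable (P \<Otimes>\<^sub>M X)"
    using H_meas2 by (simp add: split_beta')
  then show ?thesis by (rule Xs.borel_measurable_lebesgue_integral)
qed

lemma L2_eq: assumes good: "\<forall>l\<in>{1..m}. \<mu> l \<in> S l"
  shows "L2_sigma_norm \<sigma> xL xR (delta_b d \<sigma> xL xR \<psi>L \<psi>R m t \<mu>) = Nf \<mu>"
proof -
  have "integral {xL..xR} (\<lambda>x. (delta_b d \<sigma> xL xR \<psi>L \<psi>R m t \<mu> x)^2 * \<sigma> x)
      = integral {xL..xR} (\<lambda>x. H \<mu> x)"
    by (rule integral_cong) (simp add: delta_b_eq[OF good] H_def sc_def cl_id)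
  also have "\<dots> = len * integral\<^sup>L X (\<lambda>x. H \<mu> x)"
    using X_integral[OF H_meas_x H_abs] len_pos by simp
  finally show ?thesis unfolding L2_sigma_norm_def Nf_def by simp
qed

lemma Nf_int: "integrable P Nf" "integrable P (\<lambda>\<mu>. (Nf \<mu>)^2)"
proof -
  interpret prob_space P by (rule P_prob)
  have b: "\<bar>Nf \<mu>\<bar> \<le> sqrt (len * (s1 * Bdb^2))" for \<mu>
    unfolding Nf_def using IX_bnd[of \<mu>] len_pos
    by (simp add: real_sqrt_le_mono mult_left_mono)
  have [measurable]: "Nf \<in> borel_measurable P" unfolding Nf_def by measurable
  show "integrable P Nf"
    by (rule integrable_const_bound[where B="sqrt (len * (s1 * Bdb^2))"]) (use b in \<open>auto simp: Nf_def\<close>)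
  have b2: "\<bar>(Nf \<mu>)^2\<bar> \<le> (sqrt (len * (s1 * Bdb^2)))^2" for \<mu>
    using power_mono[OF b[of \<mu>] abs_ge_zero, of 2] by simp
  show "integrable P (\<lambda>\<mu>. (Nf \<mu>)^2)"
    by (rule integrable_const_bound[where B="(sqrt (len * (s1 * Bdb^2)))^2"]) (use b2 in \<open>auto simp: Nf_def\<close>)
qed

lemma Nf2: "(Nf \<mu>)^2 = len * integral\<^sup>L X (\<lambda>x. H \<mu> x)"
  unfolding Nf_def using IX_bnd[of \<mu>] len_pos by simp

definition "LnC = ln (1 + s0 * len / (16 * ab))"
definition "Cst = sqrt (s1 * ab^3 * (256 * M0^2 / s0 * (1 + LnC) + 4 * LS^2 * len))"

lemma E_Nf2: "integral\<^sup>L P (\<lambda>\<mu>. (Nf \<mu>)^2) \<le> s1 * integral {xL..xR} Q"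
proof -
  interpret prob_space P by (rule P_prob)
  interpret X: prob_space X by (rule X_props(1))
  have eq: "integral\<^sup>L P (\<lambda>\<mu>. (Nf \<mu>)^2) = len * integral\<^sup>L X (\<lambda>x. integral\<^sup>L P (\<lambda>\<mu>. H \<mu> x))"
    unfolding Nf2 by (simp add: Fub)
  have Qc: "continuous_on UNIV (\<lambda>x. Q (cl x))"
    by (rule continuous_on_compose2[OF Q_cont cl_cont]) (use cl_in in auto)
  have Qm: "(\<lambda>x. s1 * Q (cl x)) \<in> borel_measurable borel"
    using borel_measurable_continuous_onI[OF Qc] by simp
  define QB where "QB = s1 * (SUP y\<in>{xL..xR}. Q y)"
  have Qb: "\<bar>s1 * Q (cl x)\<bar> \<le> QB" for x
  proof -
    have "bounded (Q ` {xL..xR})" by (rule compact_imp_bounded, rule compact_continuous_image[OF Q_cont]) auto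
    then have "Q (cl x) \<le> (SUP y\<in>{xL..xR}. Q y)"
      using cl_in[of x] by (intro cSUP_upper) (auto simp: bounded_imp_bdd_above)
    then show ?thesis unfolding QB_def using Q_nonneg[OF cl_in[of x]] s1_pos by (simp add: abs_mult mult_left_mono)
  qed
  have "integral\<^sup>L X (\<lambda>x. integral\<^sup>L P (\<lambda>\<mu>. H \<mu> x)) \<le> integral\<^sup>L X (\<lambda>x. s1 * Q (cl x))"
  proof (rule integral_mono_AE')
    show "integrable X (\<lambda>x. s1 * Q (cl x))"
      by (rule X.integrable_const_bound[where B=QB])
         (use Qb Qm in \<open>auto simp: measurable_cong_sets[OF sets_X refl]\<close>)
    have "AE x in X. x \<in> {xL..xR}" unfolding X_def
      using uniform_Icc[OF xLR] by (auto intro!: AE_uniform_measureI)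
    then show "AE x in X. integral\<^sup>L P (\<lambda>\<mu>. H \<mu> x) \<le> s1 * Q (cl x)"
      by eventually_elim (simp add: Bnd_le_Q cl_id)
    show "AE x in X. 0 \<le> s1 * Q (cl x)" using Q_nonneg[OF cl_in] s1_pos by simp
  qed
  also have "integral\<^sup>L X (\<lambda>x. s1 * Q (cl x)) = integral {xL..xR} (\<lambda>x. s1 * Q (cl x)) / len"
    by (rule X_integral[OF Qm Qb])
  also have "integral {xL..xR} (\<lambda>x. s1 * Q (cl x)) = s1 * integral {xL..xR} Q"
    by (subst integral_cong[where g="\<lambda>x. s1 * Q x"]) (auto simp: cl_id)
  finally have "integral\<^sup>L X (\<lambda>x. integral\<^sup>L P (\<lambda>\<mu>. H \<mu> x)) \<le> s1 * integral {xL..xR} Q / len" .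
  then have "len * integral\<^sup>L X (\<lambda>x. integral\<^sup>L P (\<lambda>\<mu>. H \<mu> x)) \<le> len * (s1 * integral {xL..xR} Q / len)"
    using len_pos by (intro mult_left_mono) auto
  then show ?thesis using eq len_pos by simp
qed

end


context ctx3 begin

lemma int_Q: "integral {xL..xR} Q = (4*M0^2*(ab/NN)^2) * (4*KK/(NN * s0)) * (ln ((NN * s0)*len + KK) - ln KK)
   + (4*LS^2*(ab/NN)^3) * len"
proof -
  have "Q = (\<lambda>x. (4*M0^2*(ab/NN)^2) * (2*KK/((NN * s0)*(xR-x)+KK) + 2*KK/((NN * s0)*(x-xL)+KK)) + (4*LS^2*(ab/NN)^3))"
    by (simp add: fun_eq_iff Q_def phi_def mult.assoc)
  moreover have "a > 0" if "a = NN * s0" for a using that NN_pos s0pos by simp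
  ultimately show ?thesis
    using ftc_Q[of "NN * s0" KK xL xR "4*M0^2*(ab/NN)^2" "4*LS^2*(ab/NN)^3"] NN_pos s0pos KK_pos xLR
    by (simp add: len_def integral_unique)
qed

lemma ln_part: "ln ((NN * s0)*len + KK) - ln KK \<le> (1 + ln NN) * (1 + LnC)"
proof -
  define c where "c = s0 * len / KK"
  have c0: "0 \<le> c" using s0pos len_pos KK_pos by (simp add: c_def)
  have NN1: "1 \<le> NN" using m1 by (simp add: NN_def)
  have "ln ((NN * s0)*len + KK) - ln KK = ln (((NN * s0)*len + KK) / KK)"
  proof -
    have pos: "0 < NN * s0 * len + KK" using KK_pos NN_pos s0pos len_pos by (intro add_pos_pos mult_pos_pos)
    show ?thesis using ln_div[of "NN * s0 * len + KK" KK] pos KK_pos by simp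
  qed
  also have "((NN * s0)*len + KK) / KK = 1 + NN * c" using KK_pos by (simp add: c_def field_simps)
  also have "ln (1 + NN * c) \<le> ln (NN * (1 + c))"
    using NN1 c0 by (intro ln_mono) (auto simp: algebra_simps add_pos_nonneg)
  also have "\<dots> = ln NN + ln (1 + c)" using NN_pos c0 by (simp add: ln_mult add_pos_nonneg)
  also have "\<dots> \<le> (1 + ln NN) * (1 + ln (1 + c))"
  proof -
    have "0 \<le> ln NN" "0 \<le> ln (1 + c)" using NN1 c0 by auto
    then show ?thesis by (simp add: algebra_simps)
  qed
  also have "ln (1 + c) = LnC" by (simp add: c_def LnC_def KK_def)
  finally show ?thesis .
qed

lemma le_mul1: "0 \<le> X \<Longrightarrow> 0 \<le> y \<Longrightarrow> X \<le> X * (1 + y)" for X y :: real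
  by (simp add: distrib_left)

lemma LnC_nonneg: "0 \<le> LnC"
  unfolding LnC_def using s0pos len_pos ab_pos by simp

lemma Cst_arg: "0 \<le> s1 * ab^3 * (256 * M0^2 / s0 * (1 + LnC) + 4 * LS^2 * len)"
proof -
  have "0 \<le> 256 * M0^2 / s0 * (1 + LnC)" using s0pos LnC_nonneg by simp
  moreover have "0 \<le> 4 * LS^2 * len" using len_pos by simp
  ultimately have "0 \<le> 256 * M0^2 / s0 * (1 + LnC) + 4 * LS^2 * len" by (rule add_nonneg_nonneg)
  then show ?thesis using s1_pos ab_pos by (intro mult_nonneg_nonneg) auto
qed

lemma final_arith: "s1 * integral {xL..xR} Q \<le> Cst^2 * (NN powr (-3) * (1 + ln NN))"
proof -
  have NN1: "1 \<le> NN" using m1 by (simp add: NN_def)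
  have lnN: "0 \<le> ln NN" using NN1 by simp
  have e1: "(4*M0^2*(ab/NN)^2) * (4*KK/(NN * s0)) = (256 * M0^2 / s0) * (ab^3 / NN^3)"
    using NN_pos s0pos by (simp add: KK_def field_simps power2_eq_square power3_eq_cube)
  have e2: "(4*LS^2*(ab/NN)^3) * len = (4 * LS^2 * len) * (ab^3 / NN^3)"
    by (simp add: power_divide)
  have A: "(256 * M0^2 / s0) * (ab^3 / NN^3) * (ln ((NN * s0)*len + KK) - ln KK)
      \<le> (256 * M0^2 / s0) * (ab^3 / NN^3) * ((1 + ln NN) * (1 + LnC))"
    using ln_part s0pos ab_pos NN_pos by (intro mult_left_mono) auto
  have B: "(4 * LS^2 * len) * (ab^3 / NN^3) \<le> (4 * LS^2 * len) * (ab^3 / NN^3) * (1 + ln NN)"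
  proof -
    have "0 \<le> (4 * LS^2 * len) * (ab^3 / NN^3)" using len_pos ab_pos NN_pos by simp
    then show ?thesis using lnN le_mul1 by blast
  qed
  have "s1 * integral {xL..xR} Q \<le> s1 * ((256 * M0^2 / s0) * (ab^3 / NN^3) * ((1 + ln NN) * (1 + LnC))
      + (4 * LS^2 * len) * (ab^3 / NN^3) * (1 + ln NN))"
  proof -
    have "integral {xL..xR} Q \<le> (256 * M0^2 / s0) * (ab^3 / NN^3) * ((1 + ln NN) * (1 + LnC))
      + (4 * LS^2 * len) * (ab^3 / NN^3) * (1 + ln NN)"
      unfolding int_Q e1 e2 by (rule add_mono[OF A B])
    then show ?thesis using s1_pos by (intro mult_left_mono) auto
  qed
  also have "\<dots> = (s1 * ab^3 * (256 * M0^2 / s0 * (1 + LnC) + 4 * LS^2 * len)) * ((1 / NN^3) * (1 + ln NN))"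
  proof -
    have e: "ab^3 / NN^3 = ab^3 * (1 / NN^3)" by simp
    show ?thesis unfolding e by (simp only: algebra_simps)
  qed
  also have "s1 * ab^3 * (256 * M0^2 / s0 * (1 + LnC) + 4 * LS^2 * len) = Cst^2"
    using real_sqrt_pow2[OF Cst_arg] unfolding Cst_def by simp
  also have "1 / NN^3 = NN powr (-3)" using NN_pos by (simp add: powr_minus powr_realpow divide_inverse)
  finally show ?thesis .
qed

lemma main3: "(\<integral>\<mu>. L2_sigma_norm \<sigma> xL xR (delta_b d \<sigma> xL xR \<psi>L \<psi>R m t \<mu>) \<partial>ordinate_law m t)
   \<le> Cst * sqrt (real (2*m) powr (-3) * (1 + ln (real (2*m))))"
proof -
  interpret prob_space P by (rule P_prob)
  let ?f = "\<lambda>\<mu>. L2_sigma_norm \<sigma> xL xR (delta_b d \<sigma> xL xR \<psi>L \<psi>R m t \<mu>)"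
  have W: "0 \<le> NN powr (-3) * (1 + ln NN)" using NN_pos m1 by (simp add: NN_def)
  have Cst0: "0 \<le> Cst" unfolding Cst_def using Cst_arg by simp
  have rhs0: "0 \<le> Cst * sqrt (NN powr (-3) * (1 + ln NN))" using Cst0 W by simp
  show ?thesis
  proof (cases "integrable P ?f")
    case False
    then show ?thesis using rhs0 by (simp add: P_eq not_integrable_integral_eq NN_def)
  next
    case True
    have "integral\<^sup>L P ?f = integral\<^sup>L P Nf"
    proof (rule integral_cong_AE)
      show "?f \<in> borel_measurable P" using True by (rule borel_measurable_integrable)
      show "Nf \<in> borel_measurable P" using Nf_int(1) by (rule borel_measurable_integrable)
      show "AE \<mu> in P. ?f \<mu> = Nf \<mu>" using AE_good by eventually_elim (rule L2_eq)
    qed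
    also have "integral\<^sup>L P Nf \<le> sqrt (integral\<^sup>L P (\<lambda>\<mu>. (Nf \<mu>)^2))"
    proof (rule real_le_rsqrt)
      have "0 \<le> variance Nf" by (rule variance_positive)
      then show "(integral\<^sup>L P Nf)^2 \<le> integral\<^sup>L P (\<lambda>\<mu>. (Nf \<mu>)^2)"
        using variance_eq[OF Nf_int] by simp
    qed
    also have "\<dots> \<le> sqrt (Cst^2 * (NN powr (-3) * (1 + ln NN)))"
      using E_Nf2 final_arith by (intro real_sqrt_le_mono) simp
    also have "\<dots> = Cst * sqrt (NN powr (-3) * (1 + ln NN))"
      using Cst0 by (simp add: real_sqrt_mult)
    finally show ?thesis by (simp add: P_eq NN_def)
  qed
qed

end


theorem mainTheorem7:
  fixes xL xR d \<alpha>bar L\<^sub>L L\<^sub>R :: real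
    and \<sigma> \<psi>L \<psi>R :: "real \<Rightarrow> real"
  assumes "xL < xR"
    and "continuous_on {xL..xR} \<sigma>"
    and "\<And>x. x \<in> {xL..xR} \<Longrightarrow> \<sigma> x > 0"
    and "bounded (\<psi>L ` {0<..1})" and "L\<^sub>L-lipschitz_on {0<..1} \<psi>L"
    and "bounded (\<psi>R ` {-1..<0})" and "L\<^sub>R-lipschitz_on {-1..<0} \<psi>R"
    and "0 \<le> d" and "d < 1"
  shows "\<exists>C. \<forall>(m::nat) (t::nat \<Rightarrow> real).
           m \<ge> 1 \<and> t 0 = -1 \<and> t m = -d \<and> (\<forall>l\<in>{1..m}. t (l - 1) < t l)
           \<and> (\<forall>j\<in>{1..2*m}. real (2*m) * weight d m t j \<le> \<alpha>bar)
         \<longrightarrow> (\<integral>\<mu>. L2_sigma_norm \<sigma> xL xR (delta_b d \<sigma> xL xR \<psi>L \<psi>R m t \<mu>) \<partial>ordinate_law m t)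
             \<le> C * sqrt (real (2*m) powr (-3) * (1 + ln (real (2*m))))"
proof -
  interpret c1: ctx xL xR d "L\<^sub>L" "L\<^sub>R" \<sigma> \<psi>L \<psi>R
    using assms by unfold_locales auto
  obtain BL where BL: "\<And>v. v \<in> {0<..1} \<Longrightarrow> \<bar>\<psi>L v\<bar> \<le> BL"
    using assms(4) unfolding bounded_iff by (auto simp del: greaterThanAtMost_iff)
  obtain BR where BR: "\<And>v. v \<in> {-1..<0} \<Longrightarrow> \<bar>\<psi>R v\<bar> \<le> BR"
    using assms(6) unfolding bounded_iff by (auto simp del: atLeastLessThan_iff)
  obtain a where a: "a \<in> {xL..xR}" "\<And>y. y \<in> {xL..xR} \<Longrightarrow> \<sigma> a \<le> \<sigma> y"
    using continuous_attains_inf[of "{xL..xR}" \<sigma>] assms(1,2) by auto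
  obtain b where b: "b \<in> {xL..xR}" "\<And>y. y \<in> {xL..xR} \<Longrightarrow> \<sigma> y \<le> \<sigma> b"
    using continuous_attains_sup[of "{xL..xR}" \<sigma>] assms(1,2) by auto
  define M0 where "M0 = max BL BR"
  define s0 where "s0 = \<sigma> a"
  define s1 where "s1 = \<sigma> b"
  interpret c2: ctx2 xL xR d "L\<^sub>L" "L\<^sub>R" \<sigma> \<psi>L \<psi>R M0 s0 s1
  proof unfold_locales
    show "\<And>v. v \<in> {0<..1} \<Longrightarrow> \<bar>\<psi>L v\<bar> \<le> M0" using BL by (force simp: M0_def)
    show "\<And>v. v \<in> {-1..<0} \<Longrightarrow> \<bar>\<psi>R v\<bar> \<le> M0" using BR by (force simp: M0_def)
    show "0 < s0" using assms(3) a by (simp add: s0_def)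
    show "\<And>x. x \<in> {xL..xR} \<Longrightarrow> s0 \<le> \<sigma> x \<and> \<sigma> x \<le> s1" using a b by (simp add: s0_def s1_def)
  qed
  define C where "C = sqrt (s1 * \<alpha>bar^3 * (256 * M0^2 / s0 * (1 + ln (1 + s0 * (xR - xL) / (16 * \<alpha>bar)))
      + 4 * (L\<^sub>L + L\<^sub>R)^2 * (xR - xL)))"
  show ?thesis
  proof (intro exI allI impI)
    fix m :: nat and t :: "nat \<Rightarrow> real"
    assume h: "m \<ge> 1 \<and> t 0 = -1 \<and> t m = -d \<and> (\<forall>l\<in>{1..m}. t (l - 1) < t l)
           \<and> (\<forall>j\<in>{1..2*m}. real (2*m) * weight d m t j \<le> \<alpha>bar)"
    interpret c3: ctx3 xL xR d "L\<^sub>L" "L\<^sub>R" \<sigma> \<psi>L \<psi>R M0 s0 s1 m t \<alpha>bar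
      using h by unfold_locales auto
    have "c3.Cst = C" unfolding c3.Cst_def c3.LnC_def c3.len_def c3.LS_def C_def ..
    then show "(\<integral>\<mu>. L2_sigma_norm \<sigma> xL xR (delta_b d \<sigma> xL xR \<psi>L \<psi>R m t \<mu>) \<partial>ordinate_law m t)
             \<le> C * sqrt (real (2*m) powr (-3) * (1 + ln (real (2*m))))"
      using c3.main3 by simp
  qed
qed


end
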